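(* Every tree in $\mathcal{O}'$ belongs to $\mathcal{O}$, and $\mathcal{O}'\neq\mathcal{O}$; in fact the path $P_{10}$ belongs to $\mathcal{O}$ but not to $\mathcal{O}'$.
   Context: Family $\mathcal{O}$ (labeled trees, each vertex has status $A$ or $B$): it contains the path $P_6$ whose two central vertices have status $A$ and other four vertices status $B$; and it is closed under: Operation $\mathcal{O}_1$: for a path $xyz$ with $x,y$ of status $B$ and $z$ of status $A$, add a new path $abc$ and edge $za$ with statuses $a\colon A$, $b\colon B$, $c\colon B$; Operation $\mathcal{O}_2$: for an edge $xy$ with $x,y$ of status $B$, add a new path $abcd$ and edge $dx$ with statuses $a\colon B$, $b\colon B$, $c\colon A$, $d\colon A$. An unlabeled tree is in $\mathcal{O}$ if it is the underlying tree of a labeled tree in $\mathcal{O}$. $2$-subdivision: let $G$ be a connected graph of order at least $2$ and $\mathcal{P}=\{\mathcal{P}(v):v\in V(G)\}$ where $\mathcal{P}(v)$ is a partition of $N_G(v)$ (into nonempty blocks). $G(\mathcal{P})$ has vertex set $V(G)\cup(V(G)\times\{1\})\cup\bigcup_{v\in V(G)}(\{v\}\times\mathcal{P}(v))$ and edge set $E_1\cup E_2\cup E_3$, where $E_1=\{v(v,1):v\in V(G)\}$, $E_2=\{v(v,A): v\in V(G), A\in\mathcal{P}(v)\}$, and $E_3=\{(u,A)(v,B): uv\in E(G), A\in\mathcal{P}(u), B\in\mathcal{P}(v), v\in A, u\in B\}$. (Intuitively: subdivide each inner edge of the corona $G\circ K_1$ twice, then for each $v$ and each block $A\in\mathcal{P}(v)$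 merge the new vertices adjacent to $v$ on the edges $vw$, $w\in A$, into one vertex.) $\mathcal{O}'$ is the family of all trees $T(\mathcal{P})$ where $T$ is a tree of order at least $2$ and $\mathcal{P}$ is such a family of partitions. *)

theory Defs
  imports Main
begin

definition is_graph :: "'a set \<Rightarrow> 'a set set \<Rightarrow> bool" where
  "is_graph V E \<longleftrightarrow> (\<forall>e\<in>E. \<exists>u v. u \<noteq> v \<and> u \<in> V \<and> v \<in> V \<and> e = {u, v})"

definition connected_graph :: "'a set \<Rightarrow> 'a set set \<Rightarrow> bool" where
  "connected_graph V E \<longleftrightarrow>
     (\<forall>u\<in>V. \<forall>v\<in>V. (u, v) \<in> {(x, y). {x, y} \<in> E}\<^sup>*)"

definition is_tree :: "'a set \<Rightarrow> 'a set set \<Rightarrow> bool" where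
  "is_tree V E \<longleftrightarrow> finite V \<and> V \<noteq> {} \<and> is_graph V E \<and> connected_graph V E
                    \<and> card E + 1 = card V"

definition graph_iso :: "'a set \<Rightarrow> 'a set set \<Rightarrow> 'b set \<Rightarrow> 'b set set \<Rightarrow> bool" where
  "graph_iso V E V' E' \<longleftrightarrow> is_graph V E \<and> is_graph V' E' \<and>
     (\<exists>f. bij_betw f V V' \<and> (\<forall>u\<in>V. \<forall>v\<in>V. {u, v} \<in> E \<longleftrightarrow> {f u, f v} \<in> E'))"

definition nbhd :: "'a set set \<Rightarrow> 'a \<Rightarrow> 'a set" where
  "nbhd E v = {u. {v, u} \<in> E}"

text \<open>Labeled trees of family O. Vertices are naturals; the label function
  gives True for status A and False for status B.\<close>

definition P6_lab :: "nat set \<times> nat set set \<times> (nat \<Rightarrow> bool)" where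
  "P6_lab = ({0..5}, {{i, Suc i} | i. i < 5}, (\<lambda>i. i = 2 \<or> i = 3))"

inductive_set famO_lab :: "(nat set \<times> nat set set \<times> (nat \<Rightarrow> bool)) set" where
  base: "P6_lab \<in> famO_lab"
| op1: "\<lbrakk> (V, E, L) \<in> famO_lab; x \<in> V; y \<in> V; z \<in> V; {x, y} \<in> E; {y, z} \<in> E;
          \<not> L x; \<not> L y; L z;
          a \<notin> V; b \<notin> V; c \<notin> V; a \<noteq> b; a \<noteq> c; b \<noteq> c \<rbrakk> \<Longrightarrow>
        (V \<union> {a, b, c}, E \<union> {{z, a}, {a, b}, {b, c}}, L(a := True, b := False, c := False))
          \<in> famO_lab"
| op2: "\<lbrakk> (V, E, L) \<in> famO_lab; x \<in> V; y \<in> V; {x, y} \<in> E; \<not> L x; \<not> L y;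
          a \<notin> V; b \<notin> V; c \<notin> V; d \<notin> V; a \<noteq> b; a \<noteq> c; a \<noteq> d; b \<noteq> c; b \<noteq> d; c \<noteq> d \<rbrakk> \<Longrightarrow>
        (V \<union> {a, b, c, d}, E \<union> {{a, b}, {b, c}, {c, d}, {d, x}},
           L(a := False, b := False, c := True, d := True)) \<in> famO_lab"

definition in_famO :: "'a set \<Rightarrow> 'a set set \<Rightarrow> bool" where
  "in_famO V E \<longleftrightarrow> is_tree V E \<and> (\<exists>V' E' L. (V', E', L) \<in> famO_lab \<and> graph_iso V' E' V E)"

datatype 'a sv = Orig 'a | Leaf 'a | Blk 'a "'a set"

definition is_partition :: "'a set set \<Rightarrow> 'a set \<Rightarrow> bool" where
  "is_partition P S \<longleftrightarrow> (\<forall>A\<in>P. A \<noteq> {} \<and> A \<subseteq> S) \<and> (\<forall>x\<in>S. \<exists>!A. A \<in> P \<and> x \<in> A)"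

definition subdiv_V :: "'a set \<Rightarrow> ('a \<Rightarrow> 'a set set) \<Rightarrow> 'a sv set" where
  "subdiv_V V P = Orig ` V \<union> Leaf ` V \<union> {Blk v A | v A. v \<in> V \<and> A \<in> P v}"

definition subdiv_E :: "'a set \<Rightarrow> 'a set set \<Rightarrow> ('a \<Rightarrow> 'a set set) \<Rightarrow> 'a sv set set" where
  "subdiv_E V E P =
     {{Orig v, Leaf v} | v. v \<in> V}
   \<union> {{Orig v, Blk v A} | v A. v \<in> V \<and> A \<in> P v}
   \<union> {{Blk u A, Blk v B} | u v A B. {u, v} \<in> E \<and> A \<in> P u \<and> B \<in> P v \<and> v \<in> A \<and> u \<in> B}"

definition in_famO' :: "'a set \<Rightarrow> 'a set set \<Rightarrow> bool" where
  "in_famO' V E \<longleftrightarrow> is_tree V E \<and>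
     (\<exists>(T :: nat set) ET P. is_tree T ET \<and> card T \<ge> 2 \<and>
        (\<forall>v\<in>T. is_partition (P v) (nbhd ET v)) \<and>
        graph_iso (subdiv_V T P) (subdiv_E T ET P) V E)"

definition P10_V :: "nat set" where "P10_V = {0..9}"
definition P10_E :: "nat set set" where "P10_E = {{i, Suc i} | i. i < 9}"

end

theory Submission
  imports Defs
begin

lemma is_graph_fin: "is_graph V E \<Longrightarrow> finite V \<Longrightarrow> finite E"
proof -
  assume g: "is_graph V E" and f: "finite V"
  have "E \<subseteq> Pow V"
  proof
    fix e assume "e \<in> E"
    then obtain u v where "u \<in> V" "v \<in> V" "e = {u,v}" using g unfolding is_graph_def by blast
    thus "e \<in> Pow V" by simp
  qed
  thus ?thesis using f by (meson finite_Pow_iff finite_subset)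
qed
lemma card_incident:
  assumes "finite E"
  shows "card {e\<in>E. x \<in> e} = (\<Sum>e\<in>E. if x \<in> e then 1 else 0)"
  using assms sum.inter_filter[of E "\<lambda>_. (1::nat)" "\<lambda>e. x \<in> e"] by simp
lemma handshake:
  assumes g: "is_graph V E" and f: "finite V"
  shows "(\<Sum>x\<in>V. card {e\<in>E. x \<in> e}) = 2 * card E"
proof -
  have fE: "finite E" using is_graph_fin g f by blast
  have "(\<Sum>x\<in>V. card {e\<in>E. x \<in> e}) = (\<Sum>x\<in>V. \<Sum>e\<in>E. if x \<in> e then 1 else 0)"
    using card_incident[OF fE] by (intro sum.cong) auto
  also have "\<dots> = (\<Sum>e\<in>E. \<Sum>x\<in>V. if x \<in> e then 1 else 0)" by (rule sum.swap)
  also have "\<dots> = (\<Sum>e\<in>E. (2::nat))"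
  proof (rule sum.cong)
    fix e assume "e \<in> E"
    then obtain u v where uv: "u \<noteq> v" "u \<in> V" "v \<in> V" "e = {u,v}" using g unfolding is_graph_def by blast
    have "(\<Sum>x\<in>V. if x \<in> e then 1 else 0) = card {x\<in>V. x \<in> e}"
      using f sum.inter_filter[of V "\<lambda>_. (1::nat)" "\<lambda>x. x \<in> e"] by simp
    also have "{x\<in>V. x \<in> e} = {u,v}" using uv by auto
    finally show "(\<Sum>x\<in>V. if x \<in> e then 1 else 0) = (2::nat)" using uv by simp
  qed simp
  finally show ?thesis by simp
qed

lemma leaf_exists:
  assumes t: "is_tree T ET" and c: "card T \<ge> 2"
  shows "\<exists>w v. w \<in> T \<and> v \<in> T \<and> v \<noteq> w \<and> nbhd ET w = {v}"
proof -
  have f: "finite T" and g: "is_graph T ET" and con: "connected_graph T ET" and ce: "card ET + 1 = card T"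
    using t unfolding is_tree_def by auto
  have fE: "finite ET" using is_graph_fin g f by blast
  have "\<exists>x\<in>T. card {e\<in>ET. x \<in> e} < 2"
  proof (rule ccontr)
    assume "\<not> ?thesis"
    hence "\<forall>x\<in>T. 2 \<le> card {e\<in>ET. x \<in> e}" by auto
    hence "(\<Sum>x\<in>T. (2::nat)) \<le> (\<Sum>x\<in>T. card {e\<in>ET. x \<in> e})" by (intro sum_mono) auto
    thus False using handshake[OF g f] ce by simp
  qed
  then obtain x where x: "x \<in> T" "card {e\<in>ET. x \<in> e} < 2" by blast
  obtain u where u: "u \<in> T" "u \<noteq> x"
  proof -
    have "T - {x} \<noteq> {}"
    proof
      assume "T - {x} = {}"
      hence "T \<subseteq> {x}" by blast
      hence "card T \<le> 1" using card_mono[of "{x}" T] by simp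
      thus False using c by simp
    qed
    thus ?thesis using that by blast
  qed
  have "(x,u) \<in> {(a, b). {a, b} \<in> ET}\<^sup>*" using con x u unfolding connected_graph_def by blast
  then obtain y where "{x,y} \<in> ET" using u(2)
    by (metis (no_types, lifting) case_prodD converse_rtranclE mem_Collect_eq)
  hence ne: "{e\<in>ET. x \<in> e} \<noteq> {}" by auto
  have "finite {e\<in>ET. x \<in> e}" using fE by simp
  hence "card {e\<in>ET. x \<in> e} = 1" using ne x(2)
    by (metis One_nat_def card_0_eq less_2_cases)
  then obtain e0 where e0: "{e\<in>ET. x \<in> e} = {e0}" using card_1_singletonE by blast
  hence "e0 \<in> ET" "x \<in> e0" by auto
  then obtain v where v: "v \<noteq> x" "v \<in> T" "e0 = {x,v}"
  proof -
    obtain p q where pq: "p \<noteq> q" "p \<in> T" "q \<in> T" "e0 = {p,q}"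
      using g \<open>e0 \<in> ET\<close> unfolding is_graph_def by blast
    show ?thesis
    proof (cases "x = p")
      case True thus ?thesis using that[of q] pq by auto
    next
      case False hence "x = q" using pq \<open>x \<in> e0\<close> by auto
      thus ?thesis using that pq by (auto simp: insert_commute)
    qed
  qed
  have "nbhd ET x = {v}"
  proof
    show "nbhd ET x \<subseteq> {v}"
    proof
      fix y assume "y \<in> nbhd ET x"
      hence "{x,y} \<in> {e\<in>ET. x \<in> e}" unfolding nbhd_def by auto
      hence "{x,y} = {x,v}" using e0 v by auto
      thus "y \<in> {v}" using v(1) by (auto simp: doubleton_eq_iff)
    qed
    show "{v} \<subseteq> nbhd ET x" using \<open>e0 \<in> ET\<close> v unfolding nbhd_def by auto
  qed
  thus ?thesis using x v by blast
qed


lemma remove_leaf: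
  assumes t: "is_tree T ET" and w: "w \<in> T" and v: "v \<in> T" "v \<noteq> w" and nb: "nbhd ET w = {v}"
  shows "is_tree (T - {w}) (ET - {{v,w}})"
proof -
  have f: "finite T" and g: "is_graph T ET" and con: "connected_graph T ET" and ce: "card ET + 1 = card T"
    using t unfolding is_tree_def by auto
  have fE: "finite ET" using is_graph_fin g f by blast
  have adjw: "a = v" if "{a,w} \<in> ET" for a
  proof -
    have "{w,a} \<in> ET" using that by (simp add: insert_commute)
    hence "a \<in> nbhd ET w" unfolding nbhd_def by simp
    thus ?thesis using nb by simp
  qed
  have vw: "{v,w} \<in> ET"
  proof -
    have "v \<in> nbhd ET w" using nb by simp
    thus ?thesis unfolding nbhd_def by (simp add: insert_commute)
  qed
  have g': "is_graph (T - {w}) (ET - {{v,w}})"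
    unfolding is_graph_def
  proof
    fix e assume e: "e \<in> ET - {{v,w}}"
    then obtain p q where pq: "p \<noteq> q" "p \<in> T" "q \<in> T" "e = {p,q}"
      using g unfolding is_graph_def by blast
    have "p \<noteq> w"
    proof
      assume "p = w" hence "{q,w} \<in> ET" using e pq by (auto simp: insert_commute)
      hence "q = v" by (rule adjw)
      thus False using e pq \<open>p = w\<close> by (auto simp: insert_commute)
    qed
    moreover have "q \<noteq> w"
    proof
      assume "q = w" hence "{p,w} \<in> ET" using e pq by auto
      hence "p = v" by (rule adjw)
      thus False using e pq \<open>q = w\<close> by auto
    qed
    ultimately show "\<exists>p q. p \<noteq> q \<and> p \<in> T - {w} \<and> q \<in> T - {w} \<and> e = {p, q}" using pq by blast
  qed
  let ?R = "{(a, b). {a, b} \<in> ET}" and ?R' = "{(a, b). {a, b} \<in> ET - {{v,w}}}"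
  have key: "(x, if y = w then v else y) \<in> ?R'\<^sup>*" if "(x,y) \<in> ?R\<^sup>*" "x \<noteq> w" for x y
    using that(1)
  proof (induction rule: rtrancl_induct)
    case base thus ?case using that(2) by simp
  next
    case (step y z)
    have yz: "{y,z} \<in> ET" using step(2) by simp
    show ?case
    proof (cases "z = w")
      case True
      hence "y = v" using yz adjw by simp
      thus ?thesis using step(3) True v(2) by simp
    next
      case False
      show ?thesis
      proof (cases "y = w")
        case True
        hence "z = v" using yz adjw[of z] by (simp add: insert_commute)
        thus ?thesis using step(3) True False by simp
      next
        case yw: False
        have "{y,z} \<noteq> {v,w}" using yw False by (auto simp: doubleton_eq_iff)
        hence "(y,z) \<in> ?R'" using yz by simp
        thus ?thesis using step(3) yw False by (simp add: rtrancl_into_rtrancl)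
      qed
    qed
  qed
  have con': "connected_graph (T - {w}) (ET - {{v,w}})"
    unfolding connected_graph_def
  proof (intro ballI)
    fix x y assume x: "x \<in> T - {w}" and y: "y \<in> T - {w}"
    have "(x,y) \<in> ?R\<^sup>*" using con x y unfolding connected_graph_def by blast
    from key[OF this] show "(x,y) \<in> ?R'\<^sup>*" using x y by simp
  qed
  have "0 < card ET" using vw fE card_gt_0_iff by blast
  hence "card (ET - {{v,w}}) + 1 = card (T - {w})"
    using ce vw w fE f by (simp add: card_Diff_singleton)
  moreover have "T - {w} \<noteq> {}" using v by blast
  ultimately show ?thesis using g' con' f unfolding is_tree_def by simp
qed

fun adj :: "'a set \<Rightarrow> 'a set set \<Rightarrow> ('a \<Rightarrow> 'a set set) \<Rightarrow> 'a sv \<Rightarrow> 'a sv \<Rightarrow> bool" where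
  "adj V E P (Orig v) (Leaf u) = (v = u \<and> v \<in> V)"
| "adj V E P (Orig v) (Blk u A) = (v = u \<and> v \<in> V \<and> A \<in> P v)"
| "adj V E P (Blk u A) (Blk v B) = ({u,v} \<in> E \<and> A \<in> P u \<and> B \<in> P v \<and> v \<in> A \<and> u \<in> B)"
| "adj V E P _ _ = False"

definition adjS where "adjS V E P X Y \<longleftrightarrow> adj V E P X Y \<or> adj V E P Y X"

lemma subdivE_iff: "{X,Y} \<in> subdiv_E V E P \<longleftrightarrow> adjS V E P X Y"
proof -
  have "{X,Y} \<in> subdiv_E V E P \<longleftrightarrow>
     (\<exists>v. v \<in> V \<and> {X,Y} = {Orig v, Leaf v}) \<or>
     (\<exists>v A. v \<in> V \<and> A \<in> P v \<and> {X,Y} = {Orig v, Blk v A}) \<or>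
     (\<exists>u v A B. {u, v} \<in> E \<and> A \<in> P u \<and> B \<in> P v \<and> v \<in> A \<and> u \<in> B \<and> {X,Y} = {Blk u A, Blk v B})"
    unfolding subdiv_E_def by blast
  also have "\<dots> \<longleftrightarrow> adjS V E P X Y"
    unfolding adjS_def doubleton_eq_iff
    by (cases X; cases Y) (auto simp: insert_commute)
  finally show ?thesis .
qed

lemma partition_remove:
  assumes p: "is_partition P S"
  shows "is_partition ((\<lambda>B. B - {w}) ` P - {{}}) (S - {w})"
proof -
  have p1: "\<forall>A\<in>P. A \<noteq> {} \<and> A \<subseteq> S" and p2: "\<forall>x\<in>S. \<exists>!A. A \<in> P \<and> x \<in> A"
    using p unfolding is_partition_def by simp_all
  have 1: "\<forall>A\<in>(\<lambda>B. B - {w}) ` P - {{}}. A \<noteq> {} \<and> A \<subseteq> S - {w}"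
  proof
    fix A assume "A \<in> (\<lambda>B. B - {w}) ` P - {{}}"
    then obtain B where "B \<in> P" "A = B - {w}" "A \<noteq> {}" by auto
    moreover have "B \<subseteq> S" using p1 \<open>B \<in> P\<close> by simp
    ultimately show "A \<noteq> {} \<and> A \<subseteq> S - {w}" by auto
  qed
  have 2: "\<forall>x\<in>S - {w}. \<exists>!A. A \<in> (\<lambda>B. B - {w}) ` P - {{}} \<and> x \<in> A"
  proof
    fix x assume x: "x \<in> S - {w}"
    have ex: "\<exists>!B. B \<in> P \<and> x \<in> B" using p2 x by simp
    then obtain B where B: "B \<in> P" "x \<in> B" and uq: "\<And>B'. B' \<in> P \<Longrightarrow> x \<in> B' \<Longrightarrow> B' = B"
      by (elim ex1E) (metis)
    show "\<exists>!A. A \<in> (\<lambda>B. B - {w}) ` P - {{}} \<and> x \<in> A"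
    proof (rule ex1I[of _ "B - {w}"])
      show "B - {w} \<in> (\<lambda>B. B - {w}) ` P - {{}} \<and> x \<in> B - {w}" using B x by auto
    next
      fix A assume "A \<in> (\<lambda>B. B - {w}) ` P - {{}} \<and> x \<in> A"
      then obtain B' where "B' \<in> P" "A = B' - {w}" "x \<in> B'" by auto
      thus "A = B - {w}" using uq[of B'] by simp
    qed
  qed
  show ?thesis unfolding is_partition_def using 1 2 by (rule conjI)
qed

lemma graph_empty: "is_graph V {}" unfolding is_graph_def by simp

lemma graph_insert: "is_graph V E \<Longrightarrow> u \<noteq> v \<Longrightarrow> u \<in> V \<Longrightarrow> v \<in> V \<Longrightarrow> is_graph V (insert {u,v} E)"
  unfolding is_graph_def by (intro ballI) (metis insertE)

lemma graph_mono: "is_graph V E \<Longrightarrow> V \<subseteq> W \<Longrightarrow> is_graph W E"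
  unfolding is_graph_def by (meson subsetD)

lemma P6_E: "{{i, Suc i} | i. i < (5::nat)} = {{0,1},{1,2},{2,3},{3,4},{4,5}}"
proof -
  have a: "{{i, Suc i} | i. i < (5::nat)} = (\<lambda>i. {i, Suc i}) ` {..<5}" by blast
  have b: "{..<(5::nat)} = {0,1,2,3,4}" by (simp add: lessThan_nat_numeral lessThan_Suc insert_commute)
  show ?thesis unfolding a b by (simp add: eval_nat_numeral)
qed

lemma famO_inv: "(V,E,L) \<in> famO_lab \<Longrightarrow> finite V \<and> is_graph V E"
proof (induction rule: famO_lab.induct[split_format(complete)])
  case base
  have "is_graph {0..5::nat} {{0,1},{1,2},{2,3},{3,4},{4,5}}"
    by (intro graph_insert graph_empty) auto
  thus ?case unfolding P6_lab_def P6_E by simp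
next
  case (op1 V E L x y z a b c)
  have "is_graph (V \<union> {a,b,c}) E" using op1 graph_mono by blast
  hence "is_graph (V \<union> {a,b,c}) (insert {z,a} (insert {a,b} (insert {b,c} E)))"
    using op1 by (intro graph_insert) auto
  thus ?case using op1 by simp
next
  case (op2 V E L x y a b c d)
  have "is_graph (V \<union> {a,b,c,d}) E" using op2 graph_mono by blast
  hence "is_graph (V \<union> {a,b,c,d}) (insert {a,b} (insert {b,c} (insert {c,d} (insert {d,x} E))))"
    using op2 by (intro graph_insert) auto
  thus ?case using op2 by simp
qed


lemma P10_E': "P10_E = {{0,1},{1,2},{2,3},{3,4},{4,5},{5,6},{6,7},{7,8},{8,9}}"
proof -
  have a: "P10_E = (\<lambda>i. {i, Suc i}) ` {..<9}" unfolding P10_E_def by blast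
  have b: "{..<(9::nat)} = {0,1,2,3,4,5,6,7,8}" by (simp add: lessThan_nat_numeral lessThan_Suc insert_commute)
  show ?thesis unfolding a b by (simp add: eval_nat_numeral)
qed

lemma P10_V': "P10_V = {0,1,2,3,4,5,6,7,8,9}"
  unfolding P10_V_def by (simp add: atLeast0AtMost atMost_nat_numeral atMost_Suc insert_commute)

lemma P10_iso: "graph_iso ({0..5::nat} \<union> {6,7,8,9}) ({{0,1},{1,2},{2,3},{3,4},{4,5}} \<union> {{6,7},{7,8},{8,9},{9,0}}) P10_V P10_E"
proof -
  have V: "({0..5} \<union> {6,7,8,9}) = {0,1,2,3,4,5,6,7,8,9::nat}"
    by (simp add: atLeast0AtMost atMost_nat_numeral atMost_Suc insert_commute)
  have E: "({{0,1},{1,2},{2,3},{3,4},{4,5}} \<union> {{6,7},{7,8},{8,9},{9,0}}) =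
     {{0,1},{1,2},{2,3},{3,4},{4,5},{6,7},{7,8},{8,9},{9,0::nat}}" by auto
  define f where "f = (\<lambda>i::nat. if 6 \<le> i then i - 6 else i + 4)"
  have g1: "is_graph {0,1,2,3,4,5,6,7,8,9::nat} {{0,1},{1,2},{2,3},{3,4},{4,5},{6,7},{7,8},{8,9},{9,0::nat}}"
    by (intro graph_insert graph_empty) auto
  have g2: "is_graph {0,1,2,3,4,5,6,7,8,9::nat} {{0,1},{1,2},{2,3},{3,4},{4,5},{5,6},{6,7},{7,8},{8,9}}"
    by (intro graph_insert graph_empty) auto
  have b: "bij_betw f {0,1,2,3,4,5,6,7,8,9} {0,1,2,3,4,5,6,7,8,9}"
    unfolding bij_betw_def
  proof
    show "inj_on f {0,1,2,3,4,5,6,7,8,9}" unfolding inj_on_def f_def by simp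
    have "f ` {0,1,2,3,4,5,6,7,8,9} = {4,5,6,7,8,9,0,1,2,3}" unfolding f_def by simp
    also have "\<dots> = {0,1,2,3,4,5,6,7,8,9}" by auto
    finally show "f ` {0,1,2,3,4,5,6,7,8,9} = {0,1,2,3,4,5,6,7,8,9}" .
  qed
  have e: "\<forall>u\<in>{0,1,2,3,4,5,6,7,8,9}. \<forall>v\<in>{0,1,2,3,4,5,6,7,8,9}.
     {u, v} \<in> {{0,1},{1,2},{2,3},{3,4},{4,5},{6,7},{7,8},{8,9},{9,0::nat}} \<longleftrightarrow>
     {f u, f v} \<in> {{0,1},{1,2},{2,3},{3,4},{4,5},{5,6},{6,7},{7,8},{8,9}}"
    unfolding f_def by (simp add: doubleton_eq_iff)
  show ?thesis unfolding graph_iso_def V E P10_V' P10_E'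
    by (intro conjI g1 g2 exI[of _ f] b e)
qed


lemma P10_tree: "is_tree P10_V P10_E"
proof -
  let ?R = "{(a, b). {a, b} \<in> P10_E}"
  have st: "{i, Suc i} \<in> P10_E" if "i < 9" for i unfolding P10_E_def using that by blast
  have ch: "i \<le> j \<Longrightarrow> j \<le> 9 \<Longrightarrow> (i,j) \<in> ?R\<^sup>* \<and> (j,i) \<in> ?R\<^sup>*" for i j
  proof (induction j)
    case 0 thus ?case by simp
  next
    case (Suc j)
    show ?case
    proof (cases "i = Suc j")
      case True thus ?thesis by simp
    next
      case False
      hence ih: "(i,j) \<in> ?R\<^sup>* \<and> (j,i) \<in> ?R\<^sup>*" using Suc by simp
      have e1: "(j, Suc j) \<in> ?R" using st[of j] Suc.prems by simp
      have e2: "(Suc j, j) \<in> ?R" using st[of j] Suc.prems by (simp add: insert_commute)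
      show ?thesis using ih e1 e2 by (meson converse_rtrancl_into_rtrancl rtrancl_into_rtrancl)
    qed
  qed
  have con: "connected_graph P10_V P10_E"
    unfolding connected_graph_def
  proof (intro ballI)
    fix u v assume "u \<in> P10_V" "v \<in> P10_V"
    hence "u \<le> 9" "v \<le> 9" unfolding P10_V_def by auto
    thus "(u,v) \<in> ?R\<^sup>*" using ch[of u v] ch[of v u] by (cases "u \<le> v") auto
  qed
  have g: "is_graph P10_V P10_E" unfolding P10_V' P10_E'
    by (intro graph_insert graph_empty) auto
  have c: "card P10_E + 1 = card P10_V" unfolding P10_V' P10_E' by (simp add: doubleton_eq_iff)
  show ?thesis unfolding is_tree_def using g con c by (simp add: P10_V_def)
qed

lemma P10_in_O: "in_famO P10_V P10_E"
proof -
  have b: "({0..5::nat}, {{0,1},{1,2},{2,3},{3,4},{4,5}}, (\<lambda>i::nat. i = 2 \<or> i = 3)) \<in> famO_lab"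
    using famO_lab.base unfolding P6_lab_def P6_E .
  have "({0..5::nat} \<union> {6,7,8,9}, {{0,1},{1,2},{2,3},{3,4},{4,5}} \<union> {{6,7},{7,8},{8,9},{9,0}},
     (\<lambda>i::nat. i = 2 \<or> i = 3)(6 := False, 7 := False, 8 := True, 9 := True)) \<in> famO_lab"
    by (rule famO_lab.op2[OF b, where x=0 and y=1 and a=6 and b=7 and c=8 and d=9]) auto
  thus ?thesis unfolding in_famO_def using P10_tree P10_iso by blast
qed

lemma adjS_Leaf: "adjS V E P (Leaf t) X \<Longrightarrow> X = Orig t"
  unfolding adjS_def by (cases X) auto

lemma nbhd_sub: "is_graph T ET \<Longrightarrow> nbhd ET u \<subseteq> T - {u}"
proof
  fix x assume g: "is_graph T ET" and "x \<in> nbhd ET u"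
  hence "{u,x} \<in> ET" unfolding nbhd_def by simp
  then obtain p q where pq: "p \<noteq> q" "p \<in> T" "q \<in> T" "{u,x} = {p,q}"
    using g unfolding is_graph_def by blast
  thus "x \<in> T - {u}" by (auto simp: doubleton_eq_iff)
qed

lemma leaf_img:
  assumes phi: "bij_betw \<phi> (subdiv_V T P) P10_V"
    and e: "\<forall>X\<in>subdiv_V T P. \<forall>Y\<in>subdiv_V T P. {X,Y} \<in> subdiv_E T ET P \<longleftrightarrow> {\<phi> X, \<phi> Y} \<in> P10_E"
    and t: "t \<in> T"
  shows "\<phi> (Leaf t) \<in> {0,9}"
proof (rule ccontr)
  assume nk: "\<phi> (Leaf t) \<notin> {0,9}"
  have L: "Leaf t \<in> subdiv_V T P" using t unfolding subdiv_V_def by simp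
  define k where "k = \<phi> (Leaf t)"
  have "k \<in> P10_V" using phi L unfolding k_def bij_betw_def by auto
  hence k: "1 \<le> k" "k \<le> 8" using nk unfolding k_def P10_V_def by auto
  have ed1: "{k, k - 1} \<in> P10_E" unfolding P10_E_def using k
    by (auto intro!: exI[of _ "k - 1"] simp: insert_commute)
  have ed2: "{k, k + 1} \<in> P10_E" unfolding P10_E_def using k by auto
  have in1: "k - 1 \<in> P10_V" "k + 1 \<in> P10_V" using k unfolding P10_V_def by auto
  obtain X1 where X1: "X1 \<in> subdiv_V T P" "\<phi> X1 = k - 1" using phi in1(1) unfolding bij_betw_def by (metis imageE)
  obtain X2 where X2: "X2 \<in> subdiv_V T P" "\<phi> X2 = k + 1" using phi in1(2) unfolding bij_betw_def by (metis imageE)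
  have "{Leaf t, X1} \<in> subdiv_E T ET P" using e L X1 ed1 unfolding k_def by simp
  hence "X1 = Orig t" using adjS_Leaf subdivE_iff by metis
  moreover have "{Leaf t, X2} \<in> subdiv_E T ET P" using e L X2 ed2 unfolding k_def by simp
  hence "X2 = Orig t" using adjS_Leaf subdivE_iff by metis
  ultimately show False using X1 X2 k by simp
qed

lemma P10_not_O': "\<not> in_famO' P10_V P10_E"
proof
  assume "in_famO' P10_V P10_E"
  then obtain T :: "nat set" and ET P where t: "is_tree T ET" and c2: "card T \<ge> 2"
    and part: "\<forall>v\<in>T. is_partition (P v) (nbhd ET v)"
    and iso: "graph_iso (subdiv_V T P) (subdiv_E T ET P) P10_V P10_E"
    unfolding in_famO'_def by blast
  obtain \<phi> where phi: "bij_betw \<phi> (subdiv_V T P) P10_V"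
    and e: "\<forall>X\<in>subdiv_V T P. \<forall>Y\<in>subdiv_V T P. {X,Y} \<in> subdiv_E T ET P \<longleftrightarrow> {\<phi> X, \<phi> Y} \<in> P10_E"
    using iso unfolding graph_iso_def by blast
  have fT: "finite T" and g: "is_graph T ET" using t unfolding is_tree_def by auto
  have sub: "Leaf ` T \<subseteq> subdiv_V T P" unfolding subdiv_V_def by auto
  have inj: "inj_on (\<phi> \<circ> Leaf) T"
    unfolding inj_on_def
  proof (intro ballI impI)
    fix x y assume xy: "x \<in> T" "y \<in> T" "(\<phi> \<circ> Leaf) x = (\<phi> \<circ> Leaf) y"
    have "Leaf x \<in> subdiv_V T P" "Leaf y \<in> subdiv_V T P" using sub xy by auto
    moreover have "\<phi> (Leaf x) = \<phi> (Leaf y)" using xy(3) by simp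
    ultimately have "Leaf x = Leaf y" using inj_onD[OF bij_betw_imp_inj_on[OF phi]] by blast
    thus "x = y" by simp
  qed
  have "(\<phi> \<circ> Leaf) ` T \<subseteq> {0,9}" using leaf_img[OF phi e] by (intro image_subsetI) simp
  hence "card ((\<phi> \<circ> Leaf) ` T) \<le> card {0::nat,9}" by (intro card_mono) auto
  hence "card T \<le> 2" using card_image[OF inj] by simp
  hence "card T = 2" using c2 by simp
  then obtain u w where uw: "T = {u,w}" "u \<noteq> w" unfolding card_2_iff by auto
  have Pu: "P u \<subseteq> {{w}}"
  proof
    fix A assume A: "A \<in> P u"
    have "is_partition (P u) (nbhd ET u)" using part uw by simp
    hence "\<forall>A\<in>P u. A \<noteq> {} \<and> A \<subseteq> nbhd ET u" unfolding is_partition_def by simp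
    hence "A \<noteq> {}" "A \<subseteq> nbhd ET u" using A by auto
    moreover have "nbhd ET u \<subseteq> {w}" using nbhd_sub[OF g, of u] uw by auto
    ultimately have "A \<subseteq> {w}" "A \<noteq> {}" by auto
    hence "A = {w}" using subset_singletonD by auto
    thus "A \<in> {{w}}" by simp
  qed
  have Pw: "P w \<subseteq> {{u}}"
  proof
    fix A assume A: "A \<in> P w"
    have "is_partition (P w) (nbhd ET w)" using part uw by simp
    hence "\<forall>A\<in>P w. A \<noteq> {} \<and> A \<subseteq> nbhd ET w" unfolding is_partition_def by simp
    hence "A \<noteq> {}" "A \<subseteq> nbhd ET w" using A by auto
    moreover have "nbhd ET w \<subseteq> {u}" using nbhd_sub[OF g, of w] uw by auto
    ultimately have "A \<subseteq> {u}" "A \<noteq> {}" by auto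
    hence "A = {u}" using subset_singletonD by auto
    thus "A \<in> {{u}}" by simp
  qed
  have "subdiv_V T P \<subseteq> set [Orig u, Orig w, Leaf u, Leaf w, Blk u {w}, Blk w {u}]"
  proof
    fix X assume "X \<in> subdiv_V T P"
    hence "X \<in> Orig ` T \<or> X \<in> Leaf ` T \<or> (\<exists>v A. X = Blk v A \<and> v \<in> T \<and> A \<in> P v)"
      unfolding subdiv_V_def by blast
    moreover have "A = {w}" if "A \<in> P u" for A using Pu that by blast
    moreover have "A = {u}" if "A \<in> P w" for A using Pw that by blast
    ultimately show "X \<in> set [Orig u, Orig w, Leaf u, Leaf w, Blk u {w}, Blk w {u}]"
      using uw by auto
  qed
  hence "card (subdiv_V T P) \<le> card (set [Orig u, Orig w, Leaf u, Leaf w, Blk u {w}, Blk w {u}])"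
    by (rule card_mono[OF finite_set])
  also have "\<dots> \<le> length [Orig u, Orig w, Leaf u, Leaf w, Blk u {w}, Blk w {u}]" by (rule card_length)
  finally have "card (subdiv_V T P) \<le> 6" by simp
  moreover have "card (subdiv_V T P) = 10"
    using bij_betw_same_card[OF phi] unfolding P10_V_def by simp
  ultimately show False by simp
qed


lemma subdivV_iff: "X \<in> subdiv_V V P \<longleftrightarrow>
  (case X of Orig x \<Rightarrow> x \<in> V | Leaf x \<Rightarrow> x \<in> V | Blk x B \<Rightarrow> x \<in> V \<and> B \<in> P x)"
  by (cases X) (auto simp: subdiv_V_def)

definition isBlk :: "'a sv \<Rightarrow> bool" where
  "isBlk X = (case X of Blk _ _ \<Rightarrow> True | _ \<Rightarrow> False)"

locale leafrm =
  fixes T :: "nat set" and ET :: "nat set set" and P :: "nat \<Rightarrow> nat set set" and w v :: nat and A :: "nat set"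
  assumes tree: "is_tree T ET" and wT: "w \<in> T" and vT: "v \<in> T" and vw: "v \<noteq> w"
    and nb: "nbhd ET w = {v}"
    and part: "\<forall>x\<in>T. is_partition (P x) (nbhd ET x)"
    and AP: "A \<in> P v" and wA: "w \<in> A"
begin

definition "T' = T - {w}"
definition "ET' = ET - {{v,w}}"
definition "P' = P(v := (\<lambda>B. B - {w}) ` P v - {{}})"
definition "A0 = A - {w}"
definition "rho X = (if X = Blk v A0 then Blk v A else X)"

lemma g: "is_graph T ET" and fT: "finite T" using tree unfolding is_tree_def by auto

lemma wonly: "{x,w} \<in> ET \<Longrightarrow> x = v"
proof -
  assume "{x,w} \<in> ET"
  hence "{w,x} \<in> ET" by (simp add: insert_commute)
  hence "x \<in> nbhd ET w" unfolding nbhd_def by simp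
  thus ?thesis using nb by simp
qed

lemma vwE: "{v,w} \<in> ET"
proof -
  have "v \<in> nbhd ET w" using nb by simp
  thus ?thesis unfolding nbhd_def by (simp add: insert_commute)
qed

lemma blocks: "x \<in> T \<Longrightarrow> B \<in> P x \<Longrightarrow> B \<noteq> {} \<and> B \<subseteq> nbhd ET x"
proof -
  assume "x \<in> T" "B \<in> P x"
  moreover have "is_partition (P x) (nbhd ET x)" using part \<open>x \<in> T\<close> by simp
  ultimately show ?thesis unfolding is_partition_def by simp
qed

lemma uniq: "x \<in> T \<Longrightarrow> B1 \<in> P x \<Longrightarrow> B2 \<in> P x \<Longrightarrow> y \<in> B1 \<Longrightarrow> y \<in> B2 \<Longrightarrow> B1 = B2"
proof -
  assume a: "x \<in> T" "B1 \<in> P x" "B2 \<in> P x" "y \<in> B1" "y \<in> B2"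
  have p: "is_partition (P x) (nbhd ET x)" using part a(1) by simp
  have "y \<in> nbhd ET x" using blocks[OF a(1) a(2)] a(4) by auto
  hence "\<exists>!B. B \<in> P x \<and> y \<in> B" using p unfolding is_partition_def by simp
  thus ?thesis using a by (metis)
qed

lemma w_notin: "x \<in> T \<Longrightarrow> B \<in> P x \<Longrightarrow> w \<in> B \<Longrightarrow> x = v \<and> B = A"
proof -
  assume a: "x \<in> T" "B \<in> P x" "w \<in> B"
  hence "w \<in> nbhd ET x" using blocks by auto
  hence "{x,w} \<in> ET" unfolding nbhd_def by simp
  hence xv: "x = v" by (rule wonly)
  thus ?thesis using uniq[OF vT _ AP _ wA] a xv by auto
qed

lemma Pw: "P w = {{v}}"
proof
  show "P w \<subseteq> {{v}}"
  proof
    fix B assume "B \<in> P w"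
    hence "B \<noteq> {}" "B \<subseteq> {v}" using blocks[OF wT] nb by auto
    hence "B = {v}" using subset_singletonD by auto
    thus "B \<in> {{v}}" by simp
  qed
  have p: "is_partition (P w) (nbhd ET w)" using part wT by simp
  hence "\<exists>!B. B \<in> P w \<and> v \<in> B" using nb unfolding is_partition_def by simp
  then obtain B where "B \<in> P w" "v \<in> B" by auto
  moreover hence "B \<subseteq> {v}" using blocks[OF wT] nb by auto
  ultimately have "B = {v}" by auto
  thus "{{v}} \<subseteq> P w" using \<open>B \<in> P w\<close> by simp
qed

lemma nbhd': "x \<noteq> w \<Longrightarrow> nbhd ET' x = nbhd ET x - {w}"
proof
  assume xw: "x \<noteq> w"
  show "nbhd ET' x \<subseteq> nbhd ET x - {w}"
  proof
    fix y assume "y \<in> nbhd ET' x"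
    hence y: "{x,y} \<in> ET" "{x,y} \<noteq> {v,w}" unfolding nbhd_def ET'_def by auto
    have "y \<noteq> w"
    proof
      assume "y = w" hence "x = v" using y(1) wonly by simp
      thus False using y(2) \<open>y = w\<close> by simp
    qed
    thus "y \<in> nbhd ET x - {w}" using y unfolding nbhd_def by simp
  qed
  show "nbhd ET x - {w} \<subseteq> nbhd ET' x"
  proof
    fix y assume "y \<in> nbhd ET x - {w}"
    hence y: "{x,y} \<in> ET" "y \<noteq> w" unfolding nbhd_def by auto
    have "{x,y} \<noteq> {v,w}" using y(2) xw by (auto simp: doubleton_eq_iff)
    thus "y \<in> nbhd ET' x" using y unfolding nbhd_def ET'_def by simp
  qed
qed

lemma tree': "is_tree T' ET'"
  unfolding T'_def ET'_def using remove_leaf[OF tree wT vT vw nb] .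

lemma part': "\<forall>x\<in>T'. is_partition (P' x) (nbhd ET' x)"
proof
  fix x assume x: "x \<in> T'"
  hence xT: "x \<in> T" and xw: "x \<noteq> w" unfolding T'_def by auto
  show "is_partition (P' x) (nbhd ET' x)"
  proof (cases "x = v")
    case True
    thus ?thesis using partition_remove[of "P v" "nbhd ET v" w] part vT nbhd'[OF xw]
      unfolding P'_def by simp
  next
    case False
    have "w \<notin> nbhd ET x"
    proof
      assume "w \<in> nbhd ET x" hence "{x,w} \<in> ET" unfolding nbhd_def by simp
      thus False using wonly False by simp
    qed
    hence "nbhd ET' x = nbhd ET x" using nbhd'[OF xw] by simp
    thus ?thesis using part xT False unfolding P'_def by simp
  qed
qed

lemma P'_other: "x \<noteq> v \<Longrightarrow> P' x = P x" unfolding P'_def by simp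

lemma P'v_A0: "A0 \<noteq> {} \<Longrightarrow> A0 \<in> P' v" unfolding P'_def A0_def using AP by auto

lemma P'v_sub: "B \<in> P' v \<Longrightarrow> B \<noteq> A0 \<Longrightarrow> B \<in> P v \<and> B \<noteq> A \<and> w \<notin> B"
proof -
  assume a: "B \<in> P' v" "B \<noteq> A0"
  then obtain C where C: "C \<in> P v" "B = C - {w}" "B \<noteq> {}" unfolding P'_def by auto
  have "w \<notin> C"
  proof
    assume "w \<in> C" hence "C = A" using w_notin[OF vT C(1)] by simp
    thus False using a(2) C(2) unfolding A0_def by simp
  qed
  hence "B = C" using C by simp
  moreover have "C \<noteq> A" using \<open>w \<notin> C\<close> wA by auto
  ultimately show ?thesis using C \<open>w \<notin> C\<close> by simp
qed

lemma P'v_w: "B \<in> P' v \<Longrightarrow> w \<notin> B \<and> B \<noteq> {}" unfolding P'_def by auto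

lemma Pv_P': "B \<in> P v \<Longrightarrow> B \<noteq> A \<Longrightarrow> B \<in> P' v \<and> B \<noteq> A0"
proof -
  assume a: "B \<in> P v" "B \<noteq> A"
  have "w \<notin> B" using w_notin[OF vT a(1)] a(2) by auto
  hence "B - {w} = B" by simp
  moreover have "B \<noteq> {}" using blocks[OF vT a(1)] by simp
  ultimately have "B \<in> P' v" unfolding P'_def using a(1) by force
  moreover have "B \<noteq> A0"
  proof
    assume "B = A0"
    hence "B \<subseteq> A" unfolding A0_def by auto
    then obtain y where "y \<in> B" "y \<in> A" using \<open>B \<noteq> {}\<close> by auto
    thus False using uniq[OF vT a(1) AP] a(2) by simp
  qed
  ultimately show ?thesis by simp
qed


definition "rB x B = (if x = v \<and> B = A0 then A else B)"

lemma rho_simps: "rho (Orig x) = Orig x" "rho (Leaf x) = Leaf x" "rho (Blk x B) = Blk x (rB x B)"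
  unfolding rho_def rB_def by auto

lemma rB_P: "x \<in> T' \<Longrightarrow> B \<in> P' x \<Longrightarrow> rB x B \<in> P x"
proof -
  assume a: "x \<in> T'" "B \<in> P' x"
  show ?thesis
  proof (cases "x = v")
    case True
    thus ?thesis using a P'v_sub AP unfolding rB_def by auto
  next
    case False thus ?thesis using a P'_other unfolding rB_def by simp
  qed
qed

lemma rB_mem: "y \<noteq> w \<Longrightarrow> y \<in> rB x B \<longleftrightarrow> y \<in> B \<or> (x = v \<and> B = A0 \<and> y \<in> A)"
  unfolding rB_def A0_def by auto

lemma ET'_iff: "x \<noteq> w \<Longrightarrow> y \<noteq> w \<Longrightarrow> {x,y} \<in> ET' \<longleftrightarrow> {x,y} \<in> ET"
  unfolding ET'_def by (auto simp: doubleton_eq_iff)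

lemma T'_iff: "x \<in> T' \<longleftrightarrow> x \<in> T \<and> x \<noteq> w" unfolding T'_def by auto

lemma rho_in: "X \<in> subdiv_V T' P' \<Longrightarrow> rho X \<in> subdiv_V T P"
  by (cases X) (auto simp: subdivV_iff rho_simps T'_iff rB_P)

lemma rho_A: "X \<in> subdiv_V T' P' \<Longrightarrow> rho X = Blk v A \<Longrightarrow> X = Blk v A0"
proof (cases X)
  case (Blk x B)
  assume a: "X \<in> subdiv_V T' P'" "rho X = Blk v A"
  hence xv: "x = v" and B: "rB x B = A" using Blk rho_simps by auto
  have "B \<in> P' v" using a(1) Blk xv by (simp add: subdivV_iff)
  hence "B \<noteq> A" using P'v_w wA by auto
  hence "B = A0" using B xv unfolding rB_def by (auto split: if_splits)
  thus ?thesis using Blk xv by simp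
qed (auto simp: rho_simps)

lemma rho_neq: "X \<in> subdiv_V T' P' \<Longrightarrow> rho X \<noteq> Leaf w \<and> rho X \<noteq> Orig w \<and> rho X \<noteq> Blk w C"
  by (cases X) (auto simp: subdivV_iff rho_simps T'_iff)

lemma rho_inj: "inj_on rho (subdiv_V T' P')"
proof
  fix X Y assume X: "X \<in> subdiv_V T' P'" and Y: "Y \<in> subdiv_V T' P'" and e: "rho X = rho Y"
  show "X = Y"
  proof (rule ccontr)
    assume ne: "X \<noteq> Y"
    have "X = Blk v A0 \<or> Y = Blk v A0" using ne e unfolding rho_def by (auto split: if_splits)
    thus False
    proof
      assume "X = Blk v A0"
      hence "rho Y = Blk v A" using e unfolding rho_def by simp
      hence "Y = Blk v A0" using rho_A Y by simp
      thus False using ne \<open>X = Blk v A0\<close> by simp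
    next
      assume "Y = Blk v A0"
      hence "rho X = Blk v A" using e unfolding rho_def by simp
      hence "X = Blk v A0" using rho_A X by simp
      thus False using ne \<open>Y = Blk v A0\<close> by simp
    qed
  qed
qed

lemma rho_isBlk: "isBlk (rho X) = isBlk X"
  by (cases X) (auto simp: rho_simps isBlk_def)

lemma SV_cover: "Y \<in> subdiv_V T P \<Longrightarrow> Y \<in> rho ` subdiv_V T' P' \<or> Y \<in> {Leaf w, Orig w, Blk w {v}, Blk v A}"
proof (cases Y)
  case (Orig x)
  assume "Y \<in> subdiv_V T P"
  hence "x \<in> T" using Orig by (simp add: subdivV_iff)
  show ?thesis
  proof (cases "x = w")
    case False
    hence "Orig x \<in> subdiv_V T' P'" using \<open>x \<in> T\<close> by (simp add: subdivV_iff T'_iff)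
    thus ?thesis using Orig rho_simps(1)[of x] by (metis image_eqI)
  qed (simp add: Orig)
next
  case (Leaf x)
  assume "Y \<in> subdiv_V T P"
  hence "x \<in> T" using Leaf by (simp add: subdivV_iff)
  show ?thesis
  proof (cases "x = w")
    case False
    hence "Leaf x \<in> subdiv_V T' P'" using \<open>x \<in> T\<close> by (simp add: subdivV_iff T'_iff)
    thus ?thesis using Leaf rho_simps(2)[of x] by (metis image_eqI)
  qed (simp add: Leaf)
next
  case (Blk x B)
  assume "Y \<in> subdiv_V T P"
  hence xT: "x \<in> T" and B: "B \<in> P x" using Blk by (simp_all add: subdivV_iff)
  show ?thesis
  proof (cases "x = w")
    case True thus ?thesis using B Pw Blk by simp
  next
    case xw: False
    show ?thesis
    proof (cases "x = v \<and> B = A")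
      case True thus ?thesis using Blk by simp
    next
      case False
      have "B \<in> P' x \<and> rB x B = B"
      proof (cases "x = v")
        case True
        hence "B \<noteq> A" using False by simp
        thus ?thesis using Pv_P'[of B] B True unfolding rB_def by simp
      next
        case False thus ?thesis using B P'_other unfolding rB_def by simp
      qed
      hence "Blk x B \<in> subdiv_V T' P'" "rho (Blk x B) = Blk x B"
        using xT xw by (simp_all add: subdivV_iff T'_iff rho_simps)
      thus ?thesis using Blk by (metis image_eqI)
    qed
  qed
qed

lemma rho_adj: "X \<in> subdiv_V T' P' \<Longrightarrow> Y \<in> subdiv_V T' P' \<Longrightarrow>
   adj T' ET' P' X Y \<longleftrightarrow> adj T ET P (rho X) (rho Y)"
proof (cases X; cases Y)
  fix x y B assume X: "X = Orig x" and Y: "Y = Blk y B" and a: "X \<in> subdiv_V T' P'" "Y \<in> subdiv_V T' P'"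
  hence "y \<in> T'" "B \<in> P' y" "x \<in> T'" by (simp_all add: subdivV_iff)
  thus ?thesis using X Y rB_P by (auto simp: rho_simps T'_iff)
next
  fix x y B C assume X: "X = Blk x B" and Y: "Y = Blk y C" and a: "X \<in> subdiv_V T' P'" "Y \<in> subdiv_V T' P'"
  hence h: "y \<in> T'" "C \<in> P' y" "x \<in> T'" "B \<in> P' x" by (simp_all add: subdivV_iff)
  hence xw: "x \<noteq> w" "y \<noteq> w" by (simp_all add: T'_iff)
  have "y \<in> B \<longleftrightarrow> y \<in> rB x B" using rB_mem[OF xw(2), of x B] xw unfolding A0_def by auto
  moreover have "x \<in> C \<longleftrightarrow> x \<in> rB y C" using rB_mem[OF xw(1), of y C] xw unfolding A0_def by auto
  ultimately show ?thesis using X Y h rB_P ET'_iff[OF xw] by (auto simp: rho_simps)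
qed (auto simp: rho_simps subdivV_iff T'_iff)

lemma rho_adjS: "X \<in> subdiv_V T' P' \<Longrightarrow> Y \<in> subdiv_V T' P' \<Longrightarrow>
   adjS T' ET' P' X Y \<longleftrightarrow> adjS T ET P (rho X) (rho Y)"
  unfolding adjS_def using rho_adj by blast


lemma noloop: "{x} \<notin> ET"
proof
  assume "{x} \<in> ET"
  then obtain p q where "p \<noteq> q" "{x} = {p,q}" using g unfolding is_graph_def by blast
  thus False by (auto simp: doubleton_eq_iff)
qed

lemma N1: "X \<in> subdiv_V T' P' \<Longrightarrow> \<not> adjS T ET P (rho X) (Leaf w)"
  using rho_neq[of X] unfolding adjS_def by (cases "rho X") auto

lemma N2: "X \<in> subdiv_V T' P' \<Longrightarrow> \<not> adjS T ET P (rho X) (Orig w)"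
  using rho_neq[of X] unfolding adjS_def by (cases "rho X") auto

lemma N3: "X \<in> subdiv_V T' P' \<Longrightarrow> adjS T ET P (rho X) (Blk w {v}) \<longleftrightarrow> rho X = Blk v A"
proof -
  assume X: "X \<in> subdiv_V T' P'"
  have inS: "rho X \<in> subdiv_V T P" using rho_in[OF X] .
  show ?thesis
  proof (cases "rho X")
    case (Blk y C)
    have yT: "y \<in> T" "C \<in> P y" using inS Blk by (simp_all add: subdivV_iff)
    show ?thesis
    proof
      assume "adjS T ET P (rho X) (Blk w {v})"
      hence "{y,w} \<in> ET" "w \<in> C" using Blk unfolding adjS_def by (auto simp: insert_commute)
      hence "y = v" using wonly by simp
      hence "C = A" using w_notin[OF yT] \<open>w \<in> C\<close> by simp
      thus "rho X = Blk v A" using Blk \<open>y = v\<close> by simp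
    next
      assume "rho X = Blk v A"
      thus "adjS T ET P (rho X) (Blk w {v})" unfolding adjS_def using vwE AP Pw wA by simp
    qed
  next
    case (Orig y)
    thus ?thesis using rho_neq[OF X] unfolding adjS_def by auto
  qed (auto simp: adjS_def)
qed

lemma N4: "A = {w} \<Longrightarrow> X \<in> subdiv_V T' P' \<Longrightarrow> adjS T ET P (rho X) (Blk v A) \<longleftrightarrow> rho X = Orig v"
proof -
  assume Aw: "A = {w}" and X: "X \<in> subdiv_V T' P'"
  show ?thesis
  proof (cases "rho X")
    case (Blk y C)
    have "\<not> adj T ET P (Blk v A) (Blk y C)" using rho_neq[OF X] Blk Aw by auto
    moreover have "\<not> adj T ET P (Blk y C) (Blk v A)" using rho_neq[OF X] Blk Aw by auto
    ultimately show ?thesis using Blk unfolding adjS_def by simp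
  qed (auto simp: adjS_def AP vT)
qed

lemma NN: "adjS T ET P (Leaf w) (Orig w)" "adjS T ET P (Orig w) (Blk w {v})"
  "adjS T ET P (Blk w {v}) (Blk v A)"
  "\<not> adjS T ET P (Leaf w) (Leaf w)" "\<not> adjS T ET P (Orig w) (Orig w)"
  "\<not> adjS T ET P (Blk w {v}) (Blk w {v})" "\<not> adjS T ET P (Blk v A) (Blk v A)"
  "\<not> adjS T ET P (Leaf w) (Blk w {v})" "\<not> adjS T ET P (Leaf w) (Blk v A)"
  "\<not> adjS T ET P (Orig w) (Blk v A)"
  using wT Pw vwE AP wA vw noloop unfolding adjS_def by (auto simp: insert_commute)


end

definition Inv where
  "Inv T ET P V E L f \<longleftrightarrow> bij_betw f V (subdiv_V T P) \<and>
     (\<forall>p\<in>V. \<forall>q\<in>V. {p,q} \<in> E \<longleftrightarrow> adjS T ET P (f p) (f q)) \<and> (\<forall>p\<in>V. L p \<longleftrightarrow> isBlk (f p))"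

lemma graph_mem: "is_graph V E \<Longrightarrow> {p,q} \<in> E \<Longrightarrow> p \<in> V \<and> q \<in> V"
  unfolding is_graph_def by (auto simp: doubleton_eq_iff)

lemma adjS_sym: "adjS V E P X Y = adjS V E P Y X" unfolding adjS_def by auto

lemma sym_complete:
  assumes "\<forall>p\<in>V. \<forall>q\<in>V. Q p q" "\<forall>p\<in>V. \<forall>q\<in>N. Q p q" "\<forall>p\<in>N. \<forall>q\<in>N. Q p q"
    "\<And>p q. Q p q \<longleftrightarrow> Q q p"
  shows "\<forall>p\<in>V \<union> N. \<forall>q\<in>V \<union> N. Q p q"
  using assms by blast

lemma fresh: "finite V \<Longrightarrow> k \<ge> Suc (Max V) \<Longrightarrow> k \<notin> V"
  using Max_ge by fastforce


context leafrm begin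

lemma step1:
  assumes Aw: "A \<noteq> {w}" and lab: "(V',E',L) \<in> famO_lab" and inv: "Inv T' ET' P' V' E' L f"
  shows "\<exists>V E L f. (V,E,L) \<in> famO_lab \<and> Inv T ET P V E L f"
proof -
  have bij: "bij_betw f V' (subdiv_V T' P')"
    and ad: "\<forall>p\<in>V'. \<forall>q\<in>V'. {p,q} \<in> E' \<longleftrightarrow> adjS T' ET' P' (f p) (f q)"
    and lb: "\<forall>p\<in>V'. L p \<longleftrightarrow> isBlk (f p)" using inv unfolding Inv_def by auto
  have fV: "finite V'" and gV: "is_graph V' E'" using famO_inv[OF lab] by auto
  define a where "a = Suc (Max V')"
  define b where "b = Suc a"
  define c where "c = Suc b"
  have abc: "a \<notin> V'" "b \<notin> V'" "c \<notin> V'" "a \<noteq> b" "a \<noteq> c" "b \<noteq> c"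
    using fresh[OF fV] unfolding a_def b_def c_def by auto
  have A0ne: "A0 \<noteq> {}" using Aw wA unfolding A0_def by auto
  have vT': "v \<in> T'" using vT vw by (simp add: T'_iff)
  have inSV: "Leaf v \<in> subdiv_V T' P'" "Orig v \<in> subdiv_V T' P'" "Blk v A0 \<in> subdiv_V T' P'"
    using vT' P'v_A0[OF A0ne] by (simp_all add: subdivV_iff)
  have surj: "f ` V' = subdiv_V T' P'" and injf: "inj_on f V'" using bij unfolding bij_betw_def by auto
  obtain x0 where x0: "x0 \<in> V'" "f x0 = Leaf v" using inSV(1) surj by (metis imageE)
  obtain y0 where y0: "y0 \<in> V'" "f y0 = Orig v" using inSV(2) surj by (metis imageE)
  obtain z0 where z0: "z0 \<in> V'" "f z0 = Blk v A0" using inSV(3) surj by (metis imageE)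
  have fin: "\<And>p. p \<in> V' \<Longrightarrow> f p \<in> subdiv_V T' P'" using surj by blast
  have e1: "{x0,y0} \<in> E'" using ad x0 y0 vT' unfolding adjS_def by simp
  have e2: "{y0,z0} \<in> E'" using ad y0 z0 vT' P'v_A0[OF A0ne] unfolding adjS_def by simp
  have l: "\<not> L x0" "\<not> L y0" "L z0" using lb x0 y0 z0 by (auto simp: isBlk_def)
  define E where "E = E' \<union> {{z0, a}, {a, b}, {b, c}}"
  define L2 where "L2 = L(a := True, b := False, c := False)"
  have labn: "(V' \<union> {a,b,c}, E, L2) \<in> famO_lab"
    unfolding E_def L2_def
    by (rule famO_lab.op1[OF lab x0(1) y0(1) z0(1) _ e2 l]) (use e1 abc in \<open>auto simp: insert_commute\<close>)
  define g where "g p = (if p = a then Blk w {v} else if p = b then Orig w else if p = c then Leaf w else rho (f p))" for p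
  have gold: "\<And>p. p \<in> V' \<Longrightarrow> g p = rho (f p)" unfolding g_def using abc by auto
  have gnew: "g a = Blk w {v}" "g b = Orig w" "g c = Leaf w" unfolding g_def using abc by auto
  have rz: "rho (f z0) = Blk v A" using z0 unfolding rho_def by simp
  have inj: "inj_on g (V' \<union> {a,b,c})"
  proof (rule inj_onI)
    fix p q assume p: "p \<in> V' \<union> {a,b,c}" and q: "q \<in> V' \<union> {a,b,c}" and e: "g p = g q"
    have injr: "inj_on (rho \<circ> f) V'" using comp_inj_on[OF injf] rho_inj surj by simp
    show "p = q"
    proof (cases "p \<in> V'"; cases "q \<in> V'")
      assume "p \<in> V'" "q \<in> V'"
      thus ?thesis using e gold injr unfolding inj_on_def by simp
    next
      assume "p \<in> V'" "q \<notin> V'"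
      thus ?thesis using e gold gnew q rho_neq[OF fin] by auto
    next
      assume "p \<notin> V'" "q \<in> V'"
      thus ?thesis using e gold gnew p rho_neq[OF fin] by (metis UnE insertE empty_iff)
    next
      assume "p \<notin> V'" "q \<notin> V'"
      thus ?thesis using e gnew p q vw by auto
    qed
  qed
  have img: "g ` (V' \<union> {a,b,c}) = subdiv_V T P"
  proof
    show "g ` (V' \<union> {a,b,c}) \<subseteq> subdiv_V T P"
      using gold gnew rho_in fin wT Pw by (auto simp: subdivV_iff)
    show "subdiv_V T P \<subseteq> g ` (V' \<union> {a,b,c})"
    proof
      fix Y assume "Y \<in> subdiv_V T P"
      from SV_cover[OF this] show "Y \<in> g ` (V' \<union> {a,b,c})"
      proof
        assume "Y \<in> rho ` subdiv_V T' P'"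
        then obtain X where X: "X \<in> subdiv_V T' P'" "Y = rho X" by auto
        then obtain p where "p \<in> V'" "X = f p" using surj by (metis imageE)
        hence "p \<in> V'" "Y = rho (f p)" using X by simp_all
        thus ?thesis using gold by (metis UnI1 image_eqI)
      next
        assume "Y \<in> {Leaf w, Orig w, Blk w {v}, Blk v A}"
        moreover have "Blk v A \<in> g ` (V' \<union> {a,b,c})" using rz gold[OF z0(1)] z0(1) by (metis UnI1 image_eqI)
        moreover have "Leaf w \<in> g ` (V' \<union> {a,b,c})" "Orig w \<in> g ` (V' \<union> {a,b,c})"
          "Blk w {v} \<in> g ` (V' \<union> {a,b,c})" using gnew by (metis UnI2 image_eqI insertI1 insertI2)+
        ultimately show ?thesis by blast
      qed
    qed
  qed
  let ?Q = "\<lambda>p q. {p,q} \<in> E \<longleftrightarrow> adjS T ET P (g p) (g q)"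
  have notE': "\<And>p q. q \<notin> V' \<Longrightarrow> {p,q} \<notin> E'" using graph_mem[OF gV] by blast
  have oo: "\<forall>p\<in>V'. \<forall>q\<in>V'. ?Q p q"
  proof (intro ballI)
    fix p q assume p: "p \<in> V'" and q: "q \<in> V'"
    have "{p,q} \<in> E \<longleftrightarrow> {p,q} \<in> E'" unfolding E_def using p q abc by (auto simp: doubleton_eq_iff)
    also have "\<dots> \<longleftrightarrow> adjS T' ET' P' (f p) (f q)" using ad p q by simp
    also have "\<dots> \<longleftrightarrow> adjS T ET P (g p) (g q)" using rho_adjS[OF fin[OF p] fin[OF q]] gold p q by simp
    finally show "?Q p q" .
  qed
  have on: "\<forall>p\<in>V'. \<forall>q\<in>{a,b,c}. ?Q p q"
  proof (intro ballI)
    fix p q assume p: "p \<in> V'" and q: "q \<in> {a,b,c}"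
    have pn: "p \<noteq> a" "p \<noteq> b" "p \<noteq> c" using p abc by auto
    have nE: "{p,q} \<notin> E'" using notE' q abc by auto
    have rA: "rho (f p) = Blk v A \<longleftrightarrow> p = z0"
    proof
      assume "rho (f p) = Blk v A"
      hence "f p = Blk v A0" using rho_A[OF fin[OF p]] by simp
      thus "p = z0" using injf p z0 unfolding inj_on_def by metis
    qed (use rz in simp)
    show "?Q p q"
    proof -
      consider "q = a" | "q = b" | "q = c" using q by auto
      thus ?thesis
      proof cases
        case 1
        have "{p,q} \<in> E \<longleftrightarrow> p = z0" unfolding E_def using nE 1 pn abc by (auto simp: doubleton_eq_iff)
        thus ?thesis using N3[OF fin[OF p]] rA gold[OF p] gnew 1 by simp
      next
        case 2
        have "{p,q} \<notin> E" unfolding E_def using nE 2 pn abc by (auto simp: doubleton_eq_iff)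
        thus ?thesis using N2[OF fin[OF p]] gold[OF p] gnew 2 by simp
      next
        case 3
        have "{p,q} \<notin> E" unfolding E_def using nE 3 pn abc by (auto simp: doubleton_eq_iff)
        thus ?thesis using N1[OF fin[OF p]] gold[OF p] gnew 3 by simp
      qed
    qed
  qed
  have nn: "\<forall>p\<in>{a,b,c}. \<forall>q\<in>{a,b,c}. ?Q p q"
  proof -
    have "{p,q} \<notin> E'" if "p \<in> {a,b,c}" for p q using notE'[of p q] notE'[of q p] that abc
      by (auto simp: insert_commute)
    moreover have "z0 \<noteq> a" "z0 \<noteq> b" "z0 \<noteq> c" using z0(1) abc by auto
    moreover have "adjS T ET P (Blk w {v}) (Orig w)" "\<not> adjS T ET P (Blk w {v}) (Leaf w)"
      "adjS T ET P (Orig w) (Leaf w)" using NN adjS_sym by metis+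
    ultimately show ?thesis unfolding E_def using gnew NN abc
      by (auto simp: doubleton_eq_iff)
  qed
  have all: "\<forall>p\<in>V' \<union> {a,b,c}. \<forall>q\<in>V' \<union> {a,b,c}. ?Q p q"
    by (rule sym_complete[OF oo on nn]) (simp add: insert_commute adjS_sym)
  have labs: "\<forall>p\<in>V' \<union> {a,b,c}. L2 p \<longleftrightarrow> isBlk (g p)"
    using lb gold gnew abc rho_isBlk unfolding L2_def by (auto simp: isBlk_def)
  have "Inv T ET P (V' \<union> {a,b,c}) E L2 g"
    unfolding Inv_def bij_betw_def using inj img all labs by blast
  thus ?thesis using labn by blast
qed


lemma step2:
  assumes Aw: "A = {w}" and lab: "(V',E',L) \<in> famO_lab" and inv: "Inv T' ET' P' V' E' L f"
  shows "\<exists>V E L f. (V,E,L) \<in> famO_lab \<and> Inv T ET P V E L f"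
proof -
  have bij: "bij_betw f V' (subdiv_V T' P')"
    and ad: "\<forall>p\<in>V'. \<forall>q\<in>V'. {p,q} \<in> E' \<longleftrightarrow> adjS T' ET' P' (f p) (f q)"
    and lb: "\<forall>p\<in>V'. L p \<longleftrightarrow> isBlk (f p)" using inv unfolding Inv_def by auto
  have fV: "finite V'" and gV: "is_graph V' E'" using famO_inv[OF lab] by auto
  define a where "a = Suc (Max V')"
  define b where "b = Suc a"
  define c where "c = Suc b"
  define d where "d = Suc c"
  have abc: "a \<notin> V'" "b \<notin> V'" "c \<notin> V'" "d \<notin> V'" "a \<noteq> b" "a \<noteq> c" "b \<noteq> c" "a \<noteq> d" "b \<noteq> d" "c \<noteq> d"
    using fresh[OF fV] unfolding a_def b_def c_def d_def by auto
  have A0e: "A0 = {}" using Aw unfolding A0_def by auto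
  have vT': "v \<in> T'" using vT vw by (simp add: T'_iff)
  have inSV: "Leaf v \<in> subdiv_V T' P'" "Orig v \<in> subdiv_V T' P'"
    using vT' by (simp_all add: subdivV_iff)
  have surj: "f ` V' = subdiv_V T' P'" and injf: "inj_on f V'" using bij unfolding bij_betw_def by auto
  obtain x0 where x0: "x0 \<in> V'" "f x0 = Leaf v" using inSV(1) surj by (metis imageE)
  obtain y0 where y0: "y0 \<in> V'" "f y0 = Orig v" using inSV(2) surj by (metis imageE)
  have fin: "\<And>p. p \<in> V' \<Longrightarrow> f p \<in> subdiv_V T' P'" using surj by blast
  have e1: "{y0,x0} \<in> E'" using ad x0 y0 vT' unfolding adjS_def by simp
  have l: "\<not> L x0" "\<not> L y0" using lb x0 y0 by (auto simp: isBlk_def)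
  define E where "E = E' \<union> {{a, b}, {b, c}, {c, d}, {d, y0}}"
  define L2 where "L2 = L(a := False, b := False, c := True, d := True)"
  have labn: "(V' \<union> {a,b,c,d}, E, L2) \<in> famO_lab"
    unfolding E_def L2_def
    by (rule famO_lab.op2[OF lab y0(1) x0(1) e1 l(2) l(1)]) (use abc in auto)
  define g where "g p = (if p = a then Leaf w else if p = b then Orig w else if p = c then Blk w {v}
     else if p = d then Blk v A else rho (f p))" for p
  have gold: "\<And>p. p \<in> V' \<Longrightarrow> g p = rho (f p)" unfolding g_def using abc by auto
  have gnew: "g a = Leaf w" "g b = Orig w" "g c = Blk w {v}" "g d = Blk v A" unfolding g_def using abc by auto
  have notA: "\<And>p. p \<in> V' \<Longrightarrow> rho (f p) \<noteq> Blk v A"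
  proof
    fix p assume p: "p \<in> V'" and "rho (f p) = Blk v A"
    hence "f p = Blk v {}" using rho_A[OF fin[OF p]] A0e by simp
    hence "{} \<in> P' v" using fin[OF p] by (simp add: subdivV_iff)
    thus False using P'v_w by blast
  qed
  have inj: "inj_on g (V' \<union> {a,b,c,d})"
  proof (rule inj_onI)
    fix p q assume p: "p \<in> V' \<union> {a,b,c,d}" and q: "q \<in> V' \<union> {a,b,c,d}" and e: "g p = g q"
    have injr: "inj_on (rho \<circ> f) V'" using comp_inj_on[OF injf] rho_inj surj by simp
    show "p = q"
    proof (cases "p \<in> V'"; cases "q \<in> V'")
      assume "p \<in> V'" "q \<in> V'"
      thus ?thesis using e gold injr unfolding inj_on_def by simp
    next
      assume "p \<in> V'" "q \<notin> V'"
      thus ?thesis using e gold gnew q rho_neq[OF fin] notA by auto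
    next
      assume "p \<notin> V'" "q \<in> V'"
      thus ?thesis using e gold gnew p rho_neq[OF fin] notA by (metis UnE insertE empty_iff)
    next
      assume "p \<notin> V'" "q \<notin> V'"
      thus ?thesis using e gnew p q vw by auto
    qed
  qed
  have img: "g ` (V' \<union> {a,b,c,d}) = subdiv_V T P"
  proof
    show "g ` (V' \<union> {a,b,c,d}) \<subseteq> subdiv_V T P"
      using gold gnew rho_in fin wT Pw vT AP by (auto simp: subdivV_iff)
    show "subdiv_V T P \<subseteq> g ` (V' \<union> {a,b,c,d})"
    proof
      fix Y assume "Y \<in> subdiv_V T P"
      from SV_cover[OF this] show "Y \<in> g ` (V' \<union> {a,b,c,d})"
      proof
        assume "Y \<in> rho ` subdiv_V T' P'"
        then obtain X where X: "X \<in> subdiv_V T' P'" "Y = rho X" by auto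
        then obtain p where "p \<in> V'" "X = f p" using surj by (metis imageE)
        hence "p \<in> V'" "Y = rho (f p)" using X by simp_all
        thus ?thesis using gold by (metis UnI1 image_eqI)
      next
        assume "Y \<in> {Leaf w, Orig w, Blk w {v}, Blk v A}"
        moreover have "Leaf w \<in> g ` (V' \<union> {a,b,c,d})" "Orig w \<in> g ` (V' \<union> {a,b,c,d})"
          "Blk w {v} \<in> g ` (V' \<union> {a,b,c,d})" "Blk v A \<in> g ` (V' \<union> {a,b,c,d})"
          using gnew by (metis UnI2 image_eqI insertI1 insertI2)+
        ultimately show ?thesis by blast
      qed
    qed
  qed
  let ?Q = "\<lambda>p q. {p,q} \<in> E \<longleftrightarrow> adjS T ET P (g p) (g q)"
  have notE': "\<And>p q. q \<notin> V' \<Longrightarrow> {p,q} \<notin> E'" using graph_mem[OF gV] by blast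
  have oo: "\<forall>p\<in>V'. \<forall>q\<in>V'. ?Q p q"
  proof (intro ballI)
    fix p q assume p: "p \<in> V'" and q: "q \<in> V'"
    have "{p,q} \<in> E \<longleftrightarrow> {p,q} \<in> E'" unfolding E_def using p q abc by (auto simp: doubleton_eq_iff)
    also have "\<dots> \<longleftrightarrow> adjS T' ET' P' (f p) (f q)" using ad p q by simp
    also have "\<dots> \<longleftrightarrow> adjS T ET P (g p) (g q)" using rho_adjS[OF fin[OF p] fin[OF q]] gold p q by simp
    finally show "?Q p q" .
  qed
  have on: "\<forall>p\<in>V'. \<forall>q\<in>{a,b,c,d}. ?Q p q"
  proof (intro ballI)
    fix p q assume p: "p \<in> V'" and q: "q \<in> {a,b,c,d}"
    have pn: "p \<noteq> a" "p \<noteq> b" "p \<noteq> c" "p \<noteq> d" using p abc by auto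
    have nE: "{p,q} \<notin> E'" using notE' q abc by auto
    have rO: "rho (f p) = Orig v \<longleftrightarrow> p = y0"
    proof
      assume "rho (f p) = Orig v"
      hence "f p = Orig v" unfolding rho_def by (auto split: if_splits)
      thus "p = y0" using injf p y0 unfolding inj_on_def by metis
    qed (use y0 rho_simps in simp)
    show "?Q p q"
    proof -
      consider "q = a" | "q = b" | "q = c" | "q = d" using q by auto
      thus ?thesis
      proof cases
        case 1
        have "{p,q} \<notin> E" unfolding E_def using nE 1 pn abc by (auto simp: doubleton_eq_iff)
        thus ?thesis using N1[OF fin[OF p]] gold[OF p] gnew 1 by simp
      next
        case 2
        have "{p,q} \<notin> E" unfolding E_def using nE 2 pn abc by (auto simp: doubleton_eq_iff)
        thus ?thesis using N2[OF fin[OF p]] gold[OF p] gnew 2 by simp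
      next
        case 3
        have "{p,q} \<notin> E" unfolding E_def using nE 3 pn abc by (auto simp: doubleton_eq_iff)
        thus ?thesis using N3[OF fin[OF p]] notA[OF p] gold[OF p] gnew 3 by simp
      next
        case 4
        have "{p,q} \<in> E \<longleftrightarrow> p = y0" unfolding E_def using nE 4 pn abc by (auto simp: doubleton_eq_iff)
        thus ?thesis using N4[OF Aw fin[OF p]] rO gold[OF p] gnew 4 by simp
      qed
    qed
  qed
  have nn: "\<forall>p\<in>{a,b,c,d}. \<forall>q\<in>{a,b,c,d}. ?Q p q"
  proof -
    have "{p,q} \<notin> E'" if "p \<in> {a,b,c,d}" for p q using notE'[of p q] notE'[of q p] that abc
      by (auto simp: insert_commute)
    moreover have "y0 \<noteq> a" "y0 \<noteq> b" "y0 \<noteq> c" "y0 \<noteq> d" using y0(1) abc by auto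
    moreover have "adjS T ET P (Orig w) (Leaf w)" "adjS T ET P (Blk w {v}) (Orig w)"
      "adjS T ET P (Blk v A) (Blk w {v})" "\<not> adjS T ET P (Blk w {v}) (Leaf w)"
      "\<not> adjS T ET P (Blk v A) (Leaf w)" "\<not> adjS T ET P (Blk v A) (Orig w)"
      using NN adjS_sym by metis+
    ultimately show ?thesis unfolding E_def using gnew NN abc
      by (auto simp: doubleton_eq_iff)
  qed
  have all: "\<forall>p\<in>V' \<union> {a,b,c,d}. \<forall>q\<in>V' \<union> {a,b,c,d}. ?Q p q"
    by (rule sym_complete[OF oo on nn]) (simp add: insert_commute adjS_sym)
  have labs: "\<forall>p\<in>V' \<union> {a,b,c,d}. L2 p \<longleftrightarrow> isBlk (g p)"
    using lb gold gnew abc rho_isBlk unfolding L2_def by (auto simp: isBlk_def)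
  have "Inv T ET P (V' \<union> {a,b,c,d}) E L2 g"
    unfolding Inv_def bij_betw_def using inj img all labs by blast
  thus ?thesis using labn by blast
qed

end

lemma single_block: "is_partition Q {x} \<Longrightarrow> Q = {{x}}"
proof -
  assume p: "is_partition Q {x}"
  have 1: "\<forall>B\<in>Q. B \<noteq> {} \<and> B \<subseteq> {x}" using p unfolding is_partition_def by simp
  have "\<exists>!B. B \<in> Q \<and> x \<in> B" using p unfolding is_partition_def by simp
  then obtain B where B: "B \<in> Q" "x \<in> B" by auto
  show ?thesis
  proof
    show "Q \<subseteq> {{x}}"
    proof
      fix C assume "C \<in> Q"
      hence "C \<noteq> {}" "C \<subseteq> {x}" using 1 by auto
      hence "C = {x}" using subset_singletonD by auto
      thus "C \<in> {{x}}" by simp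
    qed
    have "B = {x}" using 1 B by auto
    thus "{{x}} \<subseteq> Q" using B by simp
  qed
qed

lemma base_case:
  assumes t: "is_tree T ET" and c: "card T = 2" and part: "\<forall>x\<in>T. is_partition (P x) (nbhd ET x)"
  shows "\<exists>V E L f. (V,E,L) \<in> famO_lab \<and> Inv T ET P V E L f"
proof -
  obtain u w where uw: "T = {u,w}" "u \<noteq> w" using c unfolding card_2_iff by auto
  have g: "is_graph T ET" and ce: "card ET + 1 = card T" and fT: "finite T" using t unfolding is_tree_def by auto
  have fE: "finite ET" using is_graph_fin g fT by blast
  have "card ET = 1" using ce c by simp
  then obtain e where e: "ET = {e}" using card_1_singletonE by blast
  then obtain p q where pq: "p \<noteq> q" "p \<in> T" "q \<in> T" "e = {p,q}" using g unfolding is_graph_def by blast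
  have ETe: "ET = {{u,w}}" using e pq uw by (auto simp: insert_commute)
  have nu: "nbhd ET u = {w}" and nw: "nbhd ET w = {u}" unfolding ETe nbhd_def using uw
    by (auto simp: doubleton_eq_iff)
  have "is_partition (P u) (nbhd ET u)" "is_partition (P w) (nbhd ET w)" using part uw by auto
  hence p1: "is_partition (P u) {w}" and p2: "is_partition (P w) {u}" using nu nw by simp_all
  have Pu: "P u = {{w}}" using single_block[OF p1] .
  have Pw: "P w = {{u}}" using single_block[OF p2] .
  define f where "f i = [Leaf u, Orig u, Blk u {w}, Blk w {u}, Orig w, Leaf w] ! i" for i
  define L where "L = (\<lambda>i::nat. i = 2 \<or> i = 3)"
  have V6: "{0..5::nat} = {0,1,2,3,4,5}" by (simp add: atLeast0AtMost atMost_nat_numeral atMost_Suc insert_commute)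
  have lab: "({0..5::nat}, {{0,1},{1,2},{2,3},{3,4},{4,5}}, L) \<in> famO_lab"
    using famO_lab.base unfolding P6_lab_def P6_E L_def .
  have SV: "subdiv_V T P = {Leaf u, Orig u, Blk u {w}, Blk w {u}, Orig w, Leaf w}"
  proof
    show "subdiv_V T P \<subseteq> {Leaf u, Orig u, Blk u {w}, Blk w {u}, Orig w, Leaf w}"
    proof
      fix X assume "X \<in> subdiv_V T P"
      thus "X \<in> {Leaf u, Orig u, Blk u {w}, Blk w {u}, Orig w, Leaf w}"
        using uw Pu Pw by (cases X) (auto simp: subdivV_iff)
    qed
    show "{Leaf u, Orig u, Blk u {w}, Blk w {u}, Orig w, Leaf w} \<subseteq> subdiv_V T P"
      using uw Pu Pw by (auto simp: subdivV_iff)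
  qed
  have bij: "bij_betw f {0..5} (subdiv_V T P)"
    unfolding bij_betw_def V6 SV
  proof
    show "inj_on f {0,1,2,3,4,5}" unfolding inj_on_def f_def using uw by simp
    show "f ` {0,1,2,3,4,5} = {Leaf u, Orig u, Blk u {w}, Blk w {u}, Orig w, Leaf w}"
      unfolding f_def by simp
  qed
  have adj: "\<forall>p\<in>{0..5}. \<forall>q\<in>{0..5}. {p,q} \<in> {{0,1},{1,2},{2,3},{3,4},{4,5::nat}} \<longleftrightarrow> adjS T ET P (f p) (f q)"
    unfolding V6 f_def adjS_def using uw by (simp add: ETe Pu Pw doubleton_eq_iff)
  have labs: "\<forall>p\<in>{0..5}. L p \<longleftrightarrow> isBlk (f p)"
    unfolding V6 f_def L_def isBlk_def by simp
  show ?thesis using lab bij adj labs unfolding Inv_def by blast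
qed


lemma main_ind:
  fixes T :: "nat set"
  shows "card T = n \<Longrightarrow> is_tree T ET \<Longrightarrow> card T \<ge> 2 \<Longrightarrow> \<forall>x\<in>T. is_partition (P x) (nbhd ET x) \<Longrightarrow>
    \<exists>V E L f. (V,E,L) \<in> famO_lab \<and> Inv T ET P V E L f"
proof (induction n arbitrary: T ET P rule: less_induct)
  case (less n)
  show ?case
  proof (cases "card T = 2")
    case True thus ?thesis using base_case less.prems by blast
  next
    case False
    obtain w v where wv: "w \<in> T" "v \<in> T" "v \<noteq> w" "nbhd ET w = {v}"
      using leaf_exists[OF less.prems(2,3)] by blast
    have "v \<in> nbhd ET w" using wv by simp
    hence "w \<in> nbhd ET v" unfolding nbhd_def by (simp add: insert_commute)
    moreover have "is_partition (P v) (nbhd ET v)" using less.prems(4) wv by simp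
    ultimately have "\<exists>!A. A \<in> P v \<and> w \<in> A" unfolding is_partition_def by simp
    then obtain A where A: "A \<in> P v" "w \<in> A" by auto
    interpret leafrm T ET P w v A
      using less.prems wv A by unfold_locales auto
    have fT: "finite T" using less.prems(2) unfolding is_tree_def by simp
    have cT': "card T' = n - 1" using less.prems(1) wv fT unfolding T'_def by simp
    have "\<exists>V E L f. (V,E,L) \<in> famO_lab \<and> Inv T' ET' P' V E L f"
      using less.IH[of "n - 1" T' ET' P'] cT' less.prems(1,3) False tree' part' by simp
    then obtain V' E' L f where "(V',E',L) \<in> famO_lab" "Inv T' ET' P' V' E' L f" by blast
    thus ?thesis using step1 step2 by (cases "A = {w}") auto
  qed
qed

theorem mainTheorem4:
  shows "(\<forall>(V :: 'a set) E. in_famO' V E \<longrightarrow> in_famO V E)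
         \<and> in_famO P10_V P10_E \<and> \<not> in_famO' P10_V P10_E"
proof (intro conjI allI impI)
  fix V :: "'a set" and E
  assume "in_famO' V E"
  then obtain T :: "nat set" and ET P where t: "is_tree V E" and tT: "is_tree T ET" and c2: "card T \<ge> 2"
    and part: "\<forall>v\<in>T. is_partition (P v) (nbhd ET v)"
    and iso: "graph_iso (subdiv_V T P) (subdiv_E T ET P) V E"
    unfolding in_famO'_def by blast
  obtain \<phi> where phi: "bij_betw \<phi> (subdiv_V T P) V"
    and e: "\<forall>X\<in>subdiv_V T P. \<forall>Y\<in>subdiv_V T P. {X,Y} \<in> subdiv_E T ET P \<longleftrightarrow> {\<phi> X, \<phi> Y} \<in> E"
    and gVE: "is_graph V E"
    using iso unfolding graph_iso_def by blast
  obtain V' E' L f where lab: "(V',E',L) \<in> famO_lab" and inv: "Inv T ET P V' E' L f"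
    using main_ind[OF refl tT c2 part] by blast
  have bf: "bij_betw f V' (subdiv_V T P)"
    and ad: "\<forall>p\<in>V'. \<forall>q\<in>V'. {p,q} \<in> E' \<longleftrightarrow> adjS T ET P (f p) (f q)" using inv unfolding Inv_def by auto
  have g': "is_graph V' E'" using famO_inv[OF lab] by simp
  have bc: "bij_betw (\<phi> \<circ> f) V' V" using bij_betw_trans[OF bf phi] .
  have fin: "\<And>p. p \<in> V' \<Longrightarrow> f p \<in> subdiv_V T P" using bf unfolding bij_betw_def by blast
  have "\<forall>p\<in>V'. \<forall>q\<in>V'. {p,q} \<in> E' \<longleftrightarrow> {(\<phi> \<circ> f) p, (\<phi> \<circ> f) q} \<in> E"
  proof (intro ballI)
    fix p q assume p: "p \<in> V'" and q: "q \<in> V'"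
    have "{p,q} \<in> E' \<longleftrightarrow> {f p, f q} \<in> subdiv_E T ET P" using ad p q subdivE_iff[of "f p" "f q" T ET P] by simp
    also have "\<dots> \<longleftrightarrow> {\<phi> (f p), \<phi> (f q)} \<in> E" using e fin[OF p] fin[OF q] by simp
    finally show "{p,q} \<in> E' \<longleftrightarrow> {(\<phi> \<circ> f) p, (\<phi> \<circ> f) q} \<in> E" by simp
  qed
  hence "graph_iso V' E' V E" unfolding graph_iso_def using g' gVE bc by blast
  thus "in_famO V E" unfolding in_famO_def using t lab by blast
next
  show "in_famO P10_V P10_E" by (rule P10_in_O)
next
  show "\<not> in_famO' P10_V P10_E" by (rule P10_not_O')
qed

end
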